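(* Let $n$ be even, $k\ge2$, and let $f(x)=a_0(x)+2a_1(x)+\cdots+2^{k-2}a_{k-2}(x)+2^{k-1}a_{k-1}(x)$ from $\mathbb{V}_n$ to $\mathbb{Z}_{2^k}$ be gbent, with Boolean $a_i$. Then the dual $f^*$ of $f$ is $$f^*(x)=b_0(x)+2b_1(x)+\cdots+2^{k-2}b_{k-2}(x)+2^{k-1}b_{k-1}(x),$$ where $b_{k-1}=a_{k-1}^*$ and $b_j=a_{k-1}^*\oplus(a_{k-1}\oplus a_j)^*$ for $j=0,\ldots,k-2$.
   Context: $\mathbb{V}_n$ is an $n$-dimensional $\mathbb{F}_2$-vector space with inner product $u\cdot x$. $f$ is gbent if $\mathcal{H}_f(u)=\sum_x\zeta_{2^k}^{f(x)}(-1)^{u\cdot x}$ ($\zeta_{2^k}=e^{2\pi i/2^k}$) has absolute value $2^{n/2}$ for all $u$. For even $n$ and gbent $f$, one has $\mathcal{H}_f(u)=2^{n/2}\zeta_{2^k}^{f^*(u)}$ for a unique function $f^*:\mathbb{V}_n\to\mathbb{Z}_{2^k}$, called the dual of $f$. For a bent Boolean function $g$ (i.e. $|\mathcal{W}_g(u)|=2^{n/2}$ where $\mathcal{W}_g(u)=\sum_x(-1)^{g(x)\oplus u\cdot x}$), its dual $g^*$ is defined by $\mathcal{W}_g(u)=2^{n/2}(-1)^{g^*(u)}$; the functions $a_{k-1}$ and $a_{k-1}\oplus a_j$ are bent when $f$ is gbent. *)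

theory Defs
  imports Complex_Main
begin

text \<open>V_n is modelled as the set of Boolean lists of length n; the inner product
  u . x is the parity of the number of positions where both are True.\<close>

definition Vn :: "nat \<Rightarrow> bool list set" where
  "Vn n = {xs. length xs = n}"

definition ip :: "nat \<Rightarrow> bool list \<Rightarrow> bool list \<Rightarrow> nat" where
  "ip n u x = card {i. i < n \<and> u ! i \<and> x ! i}"

definition zeta :: "nat \<Rightarrow> complex" where
  "zeta k = cis (2 * pi / 2 ^ k)"

text \<open>Generalized Walsh-Hadamard transform of f : V_n -> Z_{2^k} (values as nat, used modulo 2^k).\<close>
definition gH :: "nat \<Rightarrow> nat \<Rightarrow> (bool list \<Rightarrow> nat) \<Rightarrow> bool list \<Rightarrow> complex" where
  "gH n k f u = (\<Sum>x\<in>Vn n. zeta k ^ f x * (-1) ^ ip n u x)"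

definition gbent :: "nat \<Rightarrow> nat \<Rightarrow> (bool list \<Rightarrow> nat) \<Rightarrow> bool" where
  "gbent n k f \<longleftrightarrow> (\<forall>u\<in>Vn n. cmod (gH n k f u) = sqrt (2 ^ n))"

definition gdual :: "nat \<Rightarrow> nat \<Rightarrow> (bool list \<Rightarrow> nat) \<Rightarrow> bool list \<Rightarrow> nat" where
  "gdual n k f u = (THE c. c < 2 ^ k \<and> gH n k f u = complex_of_real (sqrt (2 ^ n)) * zeta k ^ c)"

definition walsh :: "nat \<Rightarrow> (bool list \<Rightarrow> bool) \<Rightarrow> bool list \<Rightarrow> real" where
  "walsh n g u = (\<Sum>x\<in>Vn n. (-1) ^ (of_bool (g x) + ip n u x))"

definition bent :: "nat \<Rightarrow> (bool list \<Rightarrow> bool) \<Rightarrow> bool" where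
  "bent n g \<longleftrightarrow> (\<forall>u\<in>Vn n. \<bar>walsh n g u\<bar> = sqrt (2 ^ n))"

definition bdual :: "nat \<Rightarrow> (bool list \<Rightarrow> bool) \<Rightarrow> bool list \<Rightarrow> bool" where
  "bdual n g u = (THE b. walsh n g u = sqrt (2 ^ n) * (-1) ^ of_bool b)"

end

theory Submission
  imports Defs "HOL-Computational_Algebra.Computational_Algebra"
begin


definition ip0 :: "int poly \<Rightarrow> complex \<Rightarrow> complex" where
  "ip0 p z = poly (map_poly of_int p) z"

lemma ip0_pCons: "ip0 (pCons a p) z = of_int a + z * ip0 p z"
  unfolding ip0_def by (subst map_poly_pCons) auto

lemma ip0_0[simp]: "ip0 0 z = 0" by (simp add: ip0_def)

lemma ip0_add: "ip0 (p + q) z = ip0 p z + ip0 q z"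
proof (induct p arbitrary: q)
  case 0 then show ?case by simp
next
  case (pCons a p)
  show ?case
  proof (cases q)
    case (pCons b q')
    then show ?thesis using pCons.hyps(2)[of q'] by (simp add: ip0_pCons algebra_simps add.commute)
  qed
qed

lemma ip0_smult: "ip0 (smult c p) z = of_int c * ip0 p z"
  by (induct p) (auto simp: ip0_pCons algebra_simps)

lemma ip0_mult: "ip0 (p * q) z = ip0 p z * ip0 q z"
  by (induct p) (auto simp: ip0_pCons ip0_add ip0_smult algebra_simps)

lemma ip0_const[simp]: "ip0 [:c:] z = of_int c" by (simp add: ip0_pCons)

lemma ip0_monom: "ip0 (monom c n) z = of_int c * z ^ n"
  unfolding ip0_def by (simp add: poly_monom map_poly_monom)


lemma zeta_pow: "zeta k ^ m = cis (real m * (2 * pi / 2 ^ k))"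
  unfolding zeta_def by (simp add: DeMoivre)

lemma zeta_half: assumes "k \<ge> 1" shows "zeta k ^ (2^(k-1)) = -1"
proof -
  have "real (2^(k-1)) * (2 * pi / 2 ^ k) = pi"
  proof -
    have "(2::real)^k = 2 * 2^(k-1)" using assms by (metis Suc_diff_1 le_numeral_extra(2) less_le_trans not_less_eq_eq power_Suc zero_less_one)
    then show ?thesis by simp
  qed
  then show ?thesis by (simp add: zeta_pow)
qed

lemma eis:
  fixes F G E :: "int poly" and N :: nat
  assumes FG: "F * G = E" and dE: "degree E = N" and ev: "\<forall>i<N. even (coeff E i)"
    and c0: "coeff E 0 = 2" and lo: "odd (coeff E N)" and dF: "degree F \<ge> 1" and dG: "degree G \<ge> 1"
  shows False
proof -
  have F0: "F \<noteq> 0" and G0: "G \<noteq> 0" using dF dG by auto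
  have dsum: "degree F + degree G = N" using FG dE F0 G0 by (metis degree_mult_eq)
  have "coeff E N = coeff F (degree F) * coeff G (degree G)"
    using FG dsum coeff_mult_degree_sum by metis
  then have oF: "odd (coeff F (degree F))" and oG: "odd (coeff G (degree G))" using lo by auto
  define a where "a = (LEAST i. odd (coeff F i))"
  define b where "b = (LEAST i. odd (coeff G i))"
  have oa: "odd (coeff F a)" unfolding a_def by (rule LeastI[of _ "degree F"]) (rule oF)
  have ob: "odd (coeff G b)" unfolding b_def by (rule LeastI[of _ "degree G"]) (rule oG)
  have ea: "\<And>i. i < a \<Longrightarrow> even (coeff F i)" unfolding a_def using not_less_Least by blast
  have eb: "\<And>i. i < b \<Longrightarrow> even (coeff G i)" unfolding b_def using not_less_Least by blast
  have aF: "a \<le> degree F" unfolding a_def by (rule Least_le) (rule oF)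
  have bG: "b \<le> degree G" unfolding b_def by (rule Least_le) (rule oG)
  have "coeff E (a+b) = (\<Sum>i\<le>a+b. coeff F i * coeff G (a+b-i))"
    using FG coeff_mult by metis
  also have "\<dots> = coeff F a * coeff G b + (\<Sum>i\<in>{..a+b}-{a}. coeff F i * coeff G (a+b-i))"
    by (subst sum.remove[of _ a]) auto
  finally have eq: "coeff E (a+b) = coeff F a * coeff G b + (\<Sum>i\<in>{..a+b}-{a}. coeff F i * coeff G (a+b-i))" .
  have "even (\<Sum>i\<in>{..a+b}-{a}. coeff F i * coeff G (a+b-i))"
  proof (rule dvd_sum)
    fix i assume "i \<in> {..a+b}-{a}"
    then have "i < a \<or> (i > a \<and> a+b-i < b)" by auto
    then show "2 dvd coeff F i * coeff G (a+b-i)" using ea eb by auto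
  qed
  then have "odd (coeff E (a+b))" using eq oa ob by simp
  then have "\<not> a + b < N" using ev by auto
  then have "a = degree F" "b = degree G" using aF bG dsum by auto
  then have "even (coeff F 0)" "even (coeff G 0)" using ea eb dF dG by auto
  moreover have "coeff E 0 = coeff F 0 * coeff G 0" using FG by (metis coeff_mult_0)
  ultimately have "4 dvd coeff E 0" by (auto elim!: evenE)
  then show False using c0 by simp
qed

definition X :: "int poly" where "X = [:0,1:]"

lemma sqpow: "m \<ge> 1 \<Longrightarrow> \<exists>q. (X - 1)^(2^m) = X^(2^m) + 1 + 2 * q"
proof (induct m rule: dec_induct)
  case base
  have "(X - 1)^2 = X^2 + 1 + 2 * (-X)" by (simp add: power2_eq_square algebra_simps)
  then show ?case by auto
next
  case (step m)
  then obtain q where q: "(X - 1)^(2^m) = X^(2^m) + 1 + 2 * q" by auto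
  have "(X - 1)^(2^Suc m) = ((X - 1)^(2^m))^2" by (simp add: power_mult[symmetric] mult.commute)
  also have "\<dots> = (X^(2^m) + 1 + 2 * q)^2" by (simp add: q)
  also have "\<dots> = (X^(2^m))^2 + 1 + 2 * (X^(2^m) + 2 * q * X^(2^m) + 2*q + 2*q*q)"
    by (simp add: power2_eq_square algebra_simps)
  also have "(X^(2^m))^2 = X^(2^Suc m)" by (simp add: power_mult[symmetric] mult.commute)
  finally show ?case by blast
qed

lemma coeff_2q: "coeff (2 * q) i = 2 * coeff (q::int poly) i"
  by (metis coeff_add mult_2)

lemma coeff_X_pow: "coeff (X ^ n) i = (if i = n then 1 else 0)"
proof -
  have "X^n = monom 1 n" unfolding X_def by (simp add: monom_altdef)
  then show ?thesis by (simp add: coeff_monom)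
qed


lemma pcompose_power: "pcompose (p ^ n) q = (pcompose p q) ^ n"
  by (induct n) (auto simp: pcompose_mult pcompose_1)

lemma irred:
  fixes F G :: "int poly"
  assumes m: "m \<ge> 1" and FG: "F * G = X ^ (2^m) + 1" and dF: "degree F \<ge> 1" and dG: "degree G \<ge> 1"
  shows False
proof -
  define N :: nat where "N = 2^m"
  have Nev: "even N" using m unfolding N_def by simp
  have N1: "N \<ge> 1" unfolding N_def by simp
  define Y :: "int poly" where "Y = X - 1"
  have Y: "Y = [:-1,1:]" unfolding Y_def X_def by (simp add: one_pCons)
  have dY: "degree Y = 1" unfolding Y by simp
  have pX: "pcompose X Y = Y" unfolding X_def by (simp add: pcompose_pCons)
  define E where "E = Y^N + 1"
  have FG': "pcompose F Y * pcompose G Y = E"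
    unfolding E_def using FG by (metis N_def pX pcompose_1 pcompose_add pcompose_mult pcompose_power)
  obtain q where q: "Y^N = X^N + 1 + 2*q" using sqpow[OF m] unfolding N_def Y_def by auto
  have cE: "coeff E i = coeff (X^N) i + coeff 1 i + 2 * coeff q i + coeff 1 i" for i
    unfolding E_def q by (simp only: coeff_add coeff_2q)
  have dE: "degree E = N"
  proof -
    have "degree (Y^N) = N" using dY by (simp add: degree_power_eq Y)
    then show ?thesis unfolding E_def using N1 by (subst degree_add_eq_left) auto
  qed
  have ev: "\<forall>i<N. even (coeff E i)"
  proof (intro allI impI)
    fix i assume "i < N"
    then show "even (coeff E i)" unfolding cE by (auto simp: coeff_X_pow coeff_1)
  qed
  have lo: "odd (coeff E N)" unfolding cE using N1 by (auto simp: coeff_X_pow coeff_1)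
  have c0: "coeff E 0 = 2"
  proof -
    have "coeff E 0 = poly E 0" by (simp add: poly_0_coeff_0)
    also have "\<dots> = 2" unfolding E_def Y using Nev by simp
    finally show ?thesis .
  qed
  show False
    by (rule eis[OF FG' dE ev c0 lo]) (use dF dG in \<open>auto simp: degree_pcompose dY\<close>)
qed

lemma content_Ep: assumes "N \<ge> 1" shows "content (X ^ N + 1 :: int poly) = 1"
proof -
  have "content (X ^ N + 1 :: int poly) dvd 1"
    using assms content_dvd_coeff[of "X ^ N + 1 :: int poly" 0] by (simp add: coeff_X_pow)
  moreover have "normalize (content (X ^ N + 1 :: int poly)) = content (X ^ N + 1 :: int poly)"
    by (rule normalize_content)
  ultimately show ?thesis by simp
qed


lemma ip0_1[simp]: "ip0 1 z = 1" by (simp add: ip0_def)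
lemma ip0_X[simp]: "ip0 X z = z" by (simp add: X_def ip0_pCons)
lemma ip0_power: "ip0 (p ^ n) z = ip0 p z ^ n" by (induct n) (auto simp: ip0_mult)

lemma no_root:
  assumes k: "k \<ge> 2"
  shows "p \<noteq> 0 \<Longrightarrow> degree p < 2^(k-1) \<Longrightarrow> ip0 p (zeta k) \<noteq> 0"
proof (induct "degree p" arbitrary: p rule: less_induct)
  case less
  define N :: nat where "N = 2^(k-1)"
  define Ep where "Ep = X^N + (1::int poly)"
  have N1: "N \<ge> 1" unfolding N_def by simp
  have Eroot: "ip0 Ep (zeta k) = 0" unfolding Ep_def N_def
    using zeta_half[of k] k by (simp add: ip0_add ip0_power)
  have dEp: "degree Ep = N" unfolding Ep_def using N1
    by (subst degree_add_eq_left) (auto simp: X_def degree_power_eq)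
  show ?case
  proof
    assume root: "ip0 p (zeta k) = 0"
    show False
    proof (cases "degree p = 0")
      case True
      then obtain c where "p = [:c:]" by (metis degree_eq_zeroE)
      then show False using root less.prems by auto
    next
      case False
      obtain q r where qr: "pseudo_divmod Ep p = (q, r)" by (cases "pseudo_divmod Ep p") auto
      define c where "c = coeff p (degree p) ^ (Suc (degree Ep) - degree p)"
      have c0: "c \<noteq> 0" unfolding c_def using less.prems by simp
      have eq: "smult c Ep = p * q + r" and rr: "r = 0 \<or> degree r < degree p"
        using pseudo_divmod[OF less.prems(1) qr] unfolding c_def by auto
      have "ip0 r (zeta k) = 0"
        using arg_cong[OF eq, of "\<lambda>t. ip0 t (zeta k)"] root Eroot by (simp add: ip0_smult ip0_add ip0_mult)
      then have r0: "r = 0" using rr less.hyps less.prems(2) by force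
      with eq have eq2: "smult c Ep = p * q" by simp
      then have q0: "q \<noteq> 0" using c0 dEp N1 by auto
      have dsum: "degree p + degree q = N" using eq2 c0 dEp q0 less.prems(1)
        by (metis degree_mult_eq degree_smult_eq)
      have "primitive_part (smult c Ep) = smult (unit_factor c) Ep"
        by (simp add: primitive_part_smult Ep_def primitive_part_prim content_Ep[OF N1])
      then have pp: "smult (unit_factor c) Ep = primitive_part p * primitive_part q"
        using eq2 by (simp add: primitive_part_mult)
      have dq: "degree (primitive_part q) \<ge> 1" using dsum less.prems(2) N_def by simp
      have dp: "degree (primitive_part p) \<ge> 1" using False by simp
      have m: "k - 1 \<ge> 1" using k by simp
      have "unit_factor c = 1 \<or> unit_factor c = -1" using c0 by (auto simp: sgn_if)
      then show False
      proof
        assume "unit_factor c = 1"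
        then have "primitive_part p * primitive_part q = X ^ (2^(k-1)) + 1" using pp Ep_def N_def by simp
        then show False using irred[OF m _ dp dq] by blast
      next
        assume "unit_factor c = -1"
        then have "(- primitive_part p) * primitive_part q = X ^ (2^(k-1)) + 1" using pp Ep_def N_def
          by (metis minus_mult_left minus_minus smult_minus_left smult_1_left)
        then show False using irred[OF m _ _ dq] dp by fastforce
      qed
    qed
  qed
qed


lemma ip0_sum: "ip0 (sum f A) z = (\<Sum>a\<in>A. ip0 (f a) z)"
  by (induct A rule: infinite_finite_induct) (auto simp: ip0_add)

locale zk = fixes k :: nat assumes k2: "2 \<le> k"
begin

abbreviation "N \<equiv> (2::nat)^(k-1)"
abbreviation "\<zeta> \<equiv> zeta k"

lemma N_ge2: "N \<ge> 2"
proof -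
  have "1 \<le> k - 1" using k2 by simp
  then show ?thesis using power_increasing[of 1 "k-1" "2::nat"] by simp
qed

lemma N_even: "even N" using k2 by simp

lemma zN: "\<zeta> ^ N = -1" using zeta_half k2 by simp

lemma zN'[simp]: "\<zeta> ^ 2 ^ (k - Suc 0) = -1" using zN by simp

lemma z2N: "\<zeta> ^ (2*N) = 1"
proof -
  have "\<zeta>^(2*N) = (\<zeta>^N)^2" by (simp only: mult.commute[of 2] power_mult)
  then show ?thesis by (simp add: zN)
qed

lemma z_ne0: "\<zeta> \<noteq> 0" using zN by (metis power_0_left zero_neq_neg_one N_ge2 not_numeral_le_zero)

lemma LI:
  assumes "(\<Sum>r<N. of_int (m r) * \<zeta> ^ r) = 0" and "r < N"
  shows "m r = 0"
proof (rule ccontr)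
  assume nz: "m r \<noteq> 0"
  define p where "p = (\<Sum>i<N. monom (m i) i)"
  have cp: "coeff p i = (if i < N then m i else 0)" for i
    unfolding p_def by (simp add: coeff_sum coeff_monom)
  have "p \<noteq> 0" using nz assms(2) cp by (metis coeff_0)
  moreover have "degree p < N"
  proof -
    have "degree p \<le> N - 1" by (rule degree_le) (auto simp: cp)
    then show ?thesis using N_ge2 by linarith
  qed
  moreover have "ip0 p \<zeta> = 0" using assms(1) unfolding p_def by (simp add: ip0_sum ip0_monom)
  ultimately show False using no_root[OF k2] by blast
qed

lemma rep_unique:
  assumes "(\<Sum>r<N. of_int (m r) * \<zeta> ^ r) = (\<Sum>r<N. of_int (m' r) * \<zeta> ^ r)" and "r < N"
  shows "m r = m' r"
proof -
  have "(\<Sum>r<N. of_int (m r - m' r) * \<zeta> ^ r) = 0"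
    using assms(1) by (simp add: algebra_simps sum_subtractf)
  then show ?thesis using LI[of "\<lambda>r. m r - m' r" r] assms(2) by simp
qed

definition inR :: "complex \<Rightarrow> bool" where
  "inR z \<longleftrightarrow> (\<exists>m::nat \<Rightarrow> int. z = (\<Sum>r<N. of_int (m r) * \<zeta> ^ r))"

lemma R_int: "inR (of_int c)"
proof -
  have "(\<Sum>r<N. of_int (if r = 0 then c else 0) * \<zeta> ^ r) = of_int c"
  proof -
    have "(\<Sum>r<N. of_int (if r = 0 then c else 0) * \<zeta> ^ r) = (\<Sum>r<N. if r = 0 then of_int c else 0)"
      by (rule sum.cong) auto
    also have "\<dots> = of_int c" using N_ge2 by (simp add: sum.delta)
    finally show ?thesis .
  qed
  then show ?thesis unfolding inR_def by metis
qed

lemma R_0: "inR 0" using R_int[of 0] by simp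
lemma R_1: "inR 1" using R_int[of 1] by simp

lemma R_add: "inR z \<Longrightarrow> inR w \<Longrightarrow> inR (z + w)"
  unfolding inR_def
proof (elim exE)
  fix m m' assume "z = (\<Sum>r<N. of_int (m r) * \<zeta> ^ r)" "w = (\<Sum>r<N. of_int (m' r) * \<zeta> ^ r)"
  then have "z + w = (\<Sum>r<N. of_int (m r + m' r) * \<zeta> ^ r)" by (simp add: sum.distrib algebra_simps)
  then show "\<exists>m. z + w = (\<Sum>r<N. of_int (m r) * \<zeta> ^ r)" by (intro exI[where x="\<lambda>r. m r + m' r"]) simp
qed

lemma R_smult: "inR z \<Longrightarrow> inR (of_int c * z)"
  unfolding inR_def
proof (elim exE)
  fix m assume "z = (\<Sum>r<N. of_int (m r) * \<zeta> ^ r)"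
  then have "of_int c * z = (\<Sum>r<N. of_int (c * m r) * \<zeta> ^ r)" by (simp add: sum_distrib_left algebra_simps)
  then show "\<exists>m. of_int c * z = (\<Sum>r<N. of_int (m r) * \<zeta> ^ r)" by (intro exI[where x="\<lambda>r. c * m r"]) simp
qed

lemma R_uminus: "inR z \<Longrightarrow> inR (- z)" using R_smult[of z "-1"] by simp
lemma R_diff: "inR z \<Longrightarrow> inR w \<Longrightarrow> inR (z - w)" using R_add R_uminus by (metis diff_conv_add_uminus)

lemma R_sum: "(\<And>a. a \<in> A \<Longrightarrow> inR (f a)) \<Longrightarrow> inR (sum f A)"
  by (induct A rule: infinite_finite_induct) (auto simp: R_0 R_add)

lemma R_zmult: "inR z \<Longrightarrow> inR (\<zeta> * z)"
  unfolding inR_def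
proof (elim exE)
  fix m assume z: "z = (\<Sum>r<N. of_int (m r) * \<zeta> ^ r)"
  define m' where "m' r = (if r = 0 then - m (N - 1) else m (r - 1))" for r
  obtain M where M: "N = Suc M" using N_ge2 by (metis Suc_pred' less_2_cases_iff not_le zero_less_iff_neq_zero)
  have "\<zeta> * z = (\<Sum>r<N. of_int (m r) * \<zeta> ^ Suc r)" unfolding z by (simp add: sum_distrib_left algebra_simps)
  also have "\<dots> = (\<Sum>r<M. of_int (m r) * \<zeta> ^ Suc r) + of_int (m M) * \<zeta> ^ N"
    unfolding M by simp
  also have "\<dots> = (\<Sum>r<M. of_int (m r) * \<zeta> ^ Suc r) - of_int (m M)" by (simp add: zN)
  also have "\<dots> = (\<Sum>r<N. of_int (m' r) * \<zeta> ^ r)"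
  proof -
    have M': "2 ^ (k - Suc 0) - Suc 0 = M" using M by simp
    show ?thesis unfolding M sum.lessThan_Suc_shift by (simp add: m'_def M')
  qed
  finally show "\<exists>m. \<zeta> * z = (\<Sum>r<N. of_int (m r) * \<zeta> ^ r)" by blast
qed

lemma R_zpow_mult: "inR z \<Longrightarrow> inR (\<zeta> ^ j * z)"
  by (induct j) (auto simp: R_zmult mult.assoc)

lemma R_zpow: "inR (\<zeta> ^ j)" using R_zpow_mult[OF R_1] by simp

lemma R_mult: assumes "inR z" "inR w" shows "inR (z * w)"
proof -
  from assms(2) obtain m where w: "w = (\<Sum>r<N. of_int (m r) * \<zeta> ^ r)" unfolding inR_def by blast
  have "z * w = (\<Sum>r<N. of_int (m r) * (\<zeta> ^ r * z))" unfolding w by (simp add: sum_distrib_left algebra_simps)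
  then show ?thesis using R_smult R_zpow_mult assms(1) by (auto intro!: R_sum)
qed

lemma R_pow: "inR z \<Longrightarrow> inR (z ^ j)" by (induct j) (auto simp: R_1 R_mult)

lemma cnj_z: "cnj \<zeta> * \<zeta> = 1"
  unfolding zeta_def by (simp add: cis_cnj cis_mult)

lemma cnj_z_eq: "cnj \<zeta> = - (\<zeta> ^ (N - 1))"
proof -
  have "\<zeta> * (- (\<zeta> ^ (N - 1))) = 1" using zN N_ge2
    by (metis minus_mult_right minus_minus power_eq_if not_numeral_le_zero)
  then show ?thesis using cnj_z z_ne0 by (metis mult.commute mult_cancel_left)
qed

lemma R_cnjz: "inR (cnj \<zeta>)" using R_uminus[OF R_zpow] cnj_z_eq by simp

lemma R_cnj: "inR z \<Longrightarrow> inR (cnj z)"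
proof -
  assume "inR z"
  then obtain m where z: "z = (\<Sum>r<N. of_int (m r) * \<zeta> ^ r)" unfolding inR_def by blast
  have "cnj z = (\<Sum>r<N. of_int (m r) * cnj \<zeta> ^ r)" unfolding z by simp
  then show ?thesis by (auto intro!: R_sum R_smult R_pow R_cnjz)
qed

end


lemma aux1: "(-1::complex) = a + 1 + 2*b \<Longrightarrow> a = -2 - 2*b"
  by (metis add.commute add_diff_cancel_right' diff_diff_eq2 minus_diff_eq one_add_one diff_minus_eq_add)

context zk begin

definition piz :: complex where "piz = 1 - \<zeta>"

definition dvdR :: "complex \<Rightarrow> complex \<Rightarrow> bool" where
  "dvdR a z \<longleftrightarrow> (\<exists>w. inR w \<and> z = a * w)"

lemma R_z: "inR \<zeta>" using R_zpow[of 1] by simp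
lemma R_pi: "inR piz" unfolding piz_def by (intro R_diff R_1 R_z)

lemma R_ip0: "inR z \<Longrightarrow> inR (ip0 p z)"
  by (induct p) (auto simp: ip0_pCons R_0 intro!: R_add R_int R_mult)

lemma geom: "1 - \<zeta> ^ r = piz * (\<Sum>i<r. \<zeta> ^ i)"
  by (induct r) (auto simp: piz_def algebra_simps)

lemma two_pi: "2 = piz * (\<Sum>i<N. \<zeta> ^ i)"
  using geom[of N] by (simp add: zN)

lemma pi_ne0: "piz \<noteq> 0"
  using two_pi by auto

lemma mod_pi: assumes "inR z" shows "dvdR piz z \<or> dvdR piz (z - 1)"
proof -
  obtain m where z: "z = (\<Sum>r<N. of_int (m r) * \<zeta> ^ r)" using assms unfolding inR_def by blast
  define S where "S = (\<Sum>r<N. m r)"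
  define W where "W = (\<Sum>r<N. of_int (m r) * (\<Sum>i<r. \<zeta> ^ i))"
  have RW: "inR W" unfolding W_def by (auto intro!: R_sum R_smult R_zpow)
  have "z = (\<Sum>r<N. of_int (m r) * (1 - piz * (\<Sum>i<r. \<zeta> ^ i)))"
    unfolding z by (intro sum.cong) (auto simp: geom[symmetric])
  also have "\<dots> = of_int S - piz * W"
    unfolding S_def W_def by (simp add: algebra_simps sum_subtractf sum_distrib_left)
  finally have zS: "z = of_int S - piz * W" .
  define G where "G = (\<Sum>i<N. \<zeta> ^ i)"
  have RG: "inR G" unfolding G_def by (auto intro!: R_sum R_zpow)
  show ?thesis
  proof (cases "even S")
    case True
    then obtain t where "S = 2 * t" by blast
    then have "z = piz * (of_int t * G - W)" using zS two_pi unfolding G_def by (simp add: algebra_simps)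
    then show ?thesis unfolding dvdR_def using RG RW by (blast intro: R_diff R_smult)
  next
    case False
    then obtain t where "S = 2 * t + 1" using oddE by blast
    then have "z - 1 = piz * (of_int t * G - W)" using zS two_pi unfolding G_def by (simp add: algebra_simps)
    then show ?thesis unfolding dvdR_def using RG RW by (blast intro: R_diff R_smult)
  qed
qed

lemma piN_rel: "\<exists>t. inR t \<and> piz ^ N = - 2 - 2 * piz * t"
proof -
  have m: "k - 1 \<ge> 1" using k2 by simp
  obtain q where q: "(X - 1)^N = X^N + 1 + 2 * q" using sqpow[OF m] by blast
  have "poly ((X - 1)^N) (0::int) = poly (X^N + 1 + 2 * q) 0" by (simp only: q)
  moreover have "(0::int) ^ 2 ^ (k - Suc 0) = 0" by simp
  ultimately have "poly q 0 = 0" using N_even N_ge2 by (simp add: X_def)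
  then obtain q' where q': "q = pCons 0 q'" by (metis pCons_cases poly_pCons mult_zero_left add_0_right)
  have "ip0 ((X - 1)^N) piz = ip0 (X^N + 1 + 2 * q) piz" by (simp only: q)
  moreover have "ip0 ((X - 1)^N) piz = -1"
  proof -
    have "X - 1 = [:-1, 1:]" by (simp add: X_def one_pCons)
    then have "ip0 (X - 1) piz = - \<zeta>" by (simp add: ip0_pCons piz_def)
    then show ?thesis using N_even by (simp add: ip0_power zN)
  qed
  moreover have "ip0 (2 * q) piz = 2 * (piz * ip0 q' piz)"
  proof -
    have "ip0 (2 * q) piz = 2 * ip0 q piz" by (simp only: mult_2 ip0_add)
    moreover have "ip0 q piz = piz * ip0 q' piz" unfolding q' by (simp add: ip0_pCons)
    ultimately show ?thesis by simp
  qed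
  ultimately have "-1 = piz ^ N + 1 + 2 * (piz * ip0 q' piz)"
    by (simp add: ip0_add ip0_power)
  then have "piz ^ N = - 2 - 2 * (piz * ip0 q' piz)" by (rule aux1)
  then have "piz ^ N = - 2 - 2 * piz * ip0 q' piz" by (simp add: mult.assoc)
  then show ?thesis using R_ip0[OF R_pi] by blast
qed

end

context zk begin
lemma piN_2: "\<exists>a. inR a \<and> piz ^ N = 2 * a"
proof -
  obtain t where t: "inR t" "piz ^ N = - 2 - 2 * piz * t" using piN_rel by blast
  define P where "P = piz ^ N"
  have "P = - 2 - 2 * piz * t" using t(2) P_def by simp
  then have "P = 2 * (-1 - piz * t)" by (simp add: algebra_simps)
  then have "piz ^ N = 2 * (-1 - piz * t)" using P_def by simp
  moreover have "inR (-1 - piz * t)" using t(1) R_int[of "-1"] by (intro R_diff R_mult R_pi) auto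
  ultimately show ?thesis by blast
qed

lemma two_piN: "\<exists>b. inR b \<and> 2 = piz ^ N * b"
proof -
  obtain t where t0: "inR t" "piz ^ N = - 2 - 2 * piz * t" using piN_rel by blast
  define P where "P = piz ^ N"
  have t: "inR t" "P = - 2 - 2 * piz * t" using t0 P_def by auto
  have "\<exists>a b. inR a \<and> inR b \<and> 2 = P * a + 2 * piz ^ j * b" for j
  proof (induct j)
    case 0
    show ?case by (rule exI[of _ 0], rule exI[of _ 1]) (auto simp: R_0 R_1)
  next
    case (Suc j)
    then obtain a b where ab: "inR a" "inR b" "2 = P * a + 2 * piz ^ j * b" by blast
    have t2: "(2::complex) = - (P) - 2 * piz * t" by (simp add: t(2))
    have "2 * piz ^ j * b = piz ^ j * b * 2" by simp
    also have "\<dots> = piz ^ j * b * (- (P) - 2 * piz * t)" by (simp only: t2[symmetric])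
    also have "\<dots> = P * (- (piz ^ j) * b) + 2 * piz ^ Suc j * (- t * b)" by (simp add: algebra_simps)
    finally have e: "2 * piz ^ j * b = P * (- (piz ^ j) * b) + 2 * piz ^ Suc j * (- t * b)" .
    have "2 = P * a + (2 * piz ^ j * b)" by (rule ab(3))
    also have "\<dots> = P * a + (P * (- (piz ^ j) * b) + 2 * piz ^ Suc j * (- t * b))" by (simp only: e)
    also have "\<dots> = P * (a - piz ^ j * b) + 2 * piz ^ Suc j * (- t * b)" by (simp add: algebra_simps)
    finally have "2 = P * (a - piz ^ j * b) + 2 * piz ^ Suc j * (- t * b)" .
    moreover have "inR (a - piz ^ j * b)" "inR (- t * b)"
      using ab t(1) by (auto intro!: R_diff R_mult R_pow R_pi R_uminus)
    ultimately show ?case by blast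
  qed
  then obtain a b where "inR a" "inR b" "2 = P * a + 2 * piz ^ N * b" by blast
  then have "2 = P * a + 2 * P * b" using P_def by simp
  then have "2 = P * (a + 2 * b)" by (simp add: algebra_simps)
  moreover have "inR (a + 2 * b)" using \<open>inR a\<close> \<open>inR b\<close> R_smult[of b 2] by (auto intro!: R_add)
  ultimately show ?thesis using P_def by blast
qed

lemma rep_const: "(\<Sum>r<N. of_int (if r = 0 then c else 0) * \<zeta> ^ r) = of_int c"
proof -
  have "(\<Sum>r<N. of_int (if r = 0 then c else 0) * \<zeta> ^ r) = (\<Sum>r<N. if r = 0 then of_int c else 0)"
    by (rule sum.cong) auto
  also have "\<dots> = of_int c" using N_ge2 by (simp add: sum.delta)
  finally show ?thesis .
qed

lemma half_notR: "\<not> (\<exists>v. inR v \<and> 1 = 2 * v)"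
proof
  assume "\<exists>v. inR v \<and> 1 = 2 * v"
  then obtain v where "inR v" "1 = 2 * v" by blast
  then obtain m where v: "v = (\<Sum>r<N. of_int (m r) * \<zeta> ^ r)" unfolding inR_def by blast
  have "2 * v = (\<Sum>r<N. of_int (2 * m r) * \<zeta> ^ r)" unfolding v sum_distrib_left
    by (intro sum.cong) auto
  also have "1 = (\<Sum>r<N. of_int (if r = 0 then 1 else 0) * \<zeta> ^ r)" using rep_const[of 1] by simp
  ultimately have "(\<Sum>r<N. of_int (2 * m r) * \<zeta> ^ r) = (\<Sum>r<N. of_int (if r = 0 then 1 else 0) * \<zeta> ^ r)"
    using \<open>1 = 2 * v\<close> by simp
  from rep_unique[OF this, of 0] N_ge2 have "2 * m 0 = 1" by simp
  then show False by presburger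
qed

lemma pi_not_unit: "\<not> dvdR piz 1"
proof
  assume "dvdR piz 1"
  then obtain w where w: "inR w" "1 = piz * w" unfolding dvdR_def by blast
  obtain a where a: "inR a" "piz ^ N = 2 * a" using piN_2 by blast
  have "1 = (piz * w) ^ N" using w(2) by simp
  also have "\<dots> = 2 * (a * w ^ N)" by (simp only: power_mult_distrib a(2) mult.assoc)
  finally have "1 = 2 * (a * w ^ N)" .
  moreover have "inR (a * w ^ N)" using a(1) w(1) by (intro R_mult R_pow)
  ultimately show False using half_notR by blast
qed

lemma cnj_pi: "cnj piz = piz * (- cnj \<zeta>)"
  using cnj_z unfolding piz_def by (simp add: algebra_simps)

end

context zk begin

lemma R_cnjz': "inR (- cnj \<zeta>)" by (intro R_uminus R_cnjz)

lemma descent: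
  "inR z \<Longrightarrow> inR w \<Longrightarrow> z * cnj z = piz ^ (2*b) * w \<Longrightarrow> \<exists>v. inR v \<and> z = piz ^ b * v"
proof (induct b arbitrary: z w)
  case 0
  then show ?case by auto
next
  case (Suc b)
  define Q where "Q = piz ^ (2*b)"
  have pw: "piz ^ (2 * Suc b) = piz * piz * Q" unfolding Q_def by (simp add: power_add)
  have zz: "z * cnj z = piz * piz * (Q * w)" using Suc.prems(3) unfolding pw by (simp add: mult.assoc)
  from mod_pi[OF Suc.prems(1)] show ?case
  proof
    assume "dvdR piz (z - 1)"
    then obtain y where y: "inR y" "z - 1 = piz * y" unfolding dvdR_def by blast
    define y' where "y' = - cnj \<zeta> * cnj y"
    have Ry': "inR y'" unfolding y'_def using y(1) by (intro R_mult R_cnjz' R_cnj)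
    have "cnj z - 1 = cnj (z - 1)" by simp
    also have "\<dots> = piz * y'" unfolding y(2) y'_def by (simp add: cnj_pi)
    finally have cz: "cnj z = 1 + piz * y'" by (simp add: algebra_simps)
    have z1: "z = 1 + piz * y" using y(2) by (simp add: algebra_simps)
    have "z * cnj z = (1 + piz * y) * (1 + piz * y')" by (subst cz, subst z1, rule refl)
    then have "z * cnj z = 1 + piz * (y + y' + piz * y * y')" by (simp add: algebra_simps)
    then have "1 = piz * (piz * (Q * w) - (y + y' + piz * y * y'))" using zz by (simp add: algebra_simps)
    moreover have "inR (piz * (Q * w) - (y + y' + piz * y * y'))"
      unfolding Q_def using y(1) Ry' Suc.prems(2) by (intro R_diff R_add R_mult R_pow R_pi)
    ultimately have "dvdR piz 1" unfolding dvdR_def by blast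
    then show ?thesis using pi_not_unit by blast
  next
    assume "dvdR piz z"
    then obtain v where v: "inR v" "z = piz * v" unfolding dvdR_def by blast
    have cz: "cnj z = piz * (- cnj \<zeta> * cnj v)" unfolding v(2) by (simp add: cnj_pi)
    have "z * cnj z = (piz * v) * (piz * (- cnj \<zeta> * cnj v))" by (subst cz, subst v(2), rule refl)
    then have "piz * piz * (- cnj \<zeta> * v * cnj v) = piz * piz * (Q * w)"
      using zz by (simp add: algebra_simps)
    then have "- cnj \<zeta> * v * cnj v = Q * w" using pi_ne0 by (metis mult_cancel_left mult_eq_0_iff)
    then have "\<zeta> * (- cnj \<zeta> * v * cnj v) = \<zeta> * (Q * w)" by simp
    then have "v * cnj v = piz ^ (2*b) * (- \<zeta> * w)"
      using cnj_z unfolding Q_def by (simp add: algebra_simps minus_equation_iff[of "v * cnj v"])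
    moreover have "inR (- \<zeta> * w)" using Suc.prems(2) by (intro R_mult R_uminus R_z)
    ultimately obtain v' where v': "inR v'" "v = piz ^ b * v'" using Suc.hyps[OF v(1)] by blast
    have "z = piz ^ Suc b * v'" using v(2) v'(2) by simp
    then show ?thesis using v'(1) by blast
  qed
qed

end


lemma sq1:
  fixes e :: "nat \<Rightarrow> int"
  assumes fin: "finite A" and s1: "(\<Sum>r\<in>A. (e r)^2) = 1"
  shows "\<exists>s\<in>A. (e s = 1 \<or> e s = -1) \<and> (\<forall>r\<in>A. r \<noteq> s \<longrightarrow> e r = 0)"
proof -
  have "\<exists>s\<in>A. e s \<noteq> 0"
  proof (rule ccontr)
    assume "\<not> ?thesis"
    then have "(\<Sum>r\<in>A. (e r)^2) = 0" by simp
    then show False using s1 by simp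
  qed
  then obtain s where s: "s \<in> A" "e s \<noteq> 0" by blast
  have split: "(\<Sum>r\<in>A. (e r)^2) = (e s)^2 + (\<Sum>r\<in>A-{s}. (e r)^2)"
    using fin s(1) by (simp add: sum.remove)
  have ge1: "(e s)^2 \<ge> 1" using s(2) by (simp add: power2_eq_square) (metis int_one_le_iff_zero_less less_le zero_le_mult_iff mult_neg_neg mult_pos_pos not_le)
  have ge0: "(\<Sum>r\<in>A-{s}. (e r)^2) \<ge> 0" by (simp add: sum_nonneg)
  have "(e s)^2 = 1" "(\<Sum>r\<in>A-{s}. (e r)^2) = 0" using split s1 ge1 ge0 by linarith+
  then have "e s = 1 \<or> e s = -1" "\<forall>r\<in>A-{s}. (e r)^2 = 0"
    using fin by (auto simp: power2_eq_1_iff sum_nonneg_eq_0_iff)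
  then show ?thesis using s(1) by auto
qed

context zk begin

lemma regular:
  assumes Rz: "inR z" and zz: "z * cnj z = 2 ^ n" and ev: "even n"
  shows "\<exists>w. inR w \<and> z = 2 ^ (n div 2) * w \<and> w * cnj w = 1"
proof -
  define h where "h = n div 2"
  have n: "n = 2 * h" using ev unfolding h_def by simp
  obtain b where b: "inR b" "2 = piz ^ N * b" using two_piN by blast
  have "(2::complex) ^ n = (piz ^ N * b) ^ n" using b(2) by simp
  also have "\<dots> = piz ^ (N * n) * b ^ n" by (simp add: power_mult_distrib power_mult)
  also have "N * n = 2 * (h * N)" unfolding n by simp
  finally have "z * cnj z = piz ^ (2 * (h * N)) * b ^ n" using zz by simp
  then obtain v where v: "inR v" "z = piz ^ (h * N) * v"
    using descent[OF Rz R_pow[OF b(1)]] by blast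
  obtain a where a: "inR a" "piz ^ N = 2 * a" using piN_2 by blast
  have "piz ^ (h * N) = (piz ^ N) ^ h" by (simp only: mult.commute[of h] power_mult)
  also have "\<dots> = (2 * a) ^ h" by (simp only: a(2))
  also have "\<dots> = 2 ^ h * a ^ h" by (simp add: power_mult_distrib)
  finally have "piz ^ (h * N) = 2 ^ h * a ^ h" .
  then have zw: "z = 2 ^ h * (a ^ h * v)" using v(2) by simp
  have Rw: "inR (a ^ h * v)" using a(1) v(1) by (intro R_mult R_pow)
  define w where "w = a ^ h * v"
  have "(2::complex) ^ n * (w * cnj w) = (2 ^ h * w) * cnj (2 ^ h * w)"
    unfolding n by (simp add: power_mult algebra_simps power2_eq_square)
  also have "\<dots> = 2 ^ n" using zz zw unfolding w_def by simp
  finally have "w * cnj w = 1" by simp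
  then show ?thesis using Rw zw unfolding h_def w_def by blast
qed

definition repr :: "complex \<Rightarrow> nat \<Rightarrow> int" where
  "repr z = (SOME m. z = (\<Sum>r<N. of_int (m r) * \<zeta> ^ r))"

lemma repr: "inR z \<Longrightarrow> z = (\<Sum>r<N. of_int (repr z r) * \<zeta> ^ r)"
proof -
  assume "inR z"
  then obtain m where "z = (\<Sum>r<N. of_int (m r) * \<zeta> ^ r)" unfolding inR_def by blast
  then show ?thesis unfolding repr_def by (rule someI[where P="\<lambda>m. z = (\<Sum>r<N. of_int (m r) * \<zeta> ^ r)"])
qed

lemma repr_eq: "z = (\<Sum>r<N. of_int (m r) * \<zeta> ^ r) \<Longrightarrow> r < N \<Longrightarrow> repr z r = m r"
proof -
  assume z: "z = (\<Sum>r<N. of_int (m r) * \<zeta> ^ r)" and r: "r < N"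
  have "inR z" using z unfolding inR_def by blast
  then show ?thesis using rep_unique[OF _ r, of "repr z" m] repr z by metis
qed

lemma repr_add: "inR z \<Longrightarrow> inR w \<Longrightarrow> repr (z + w) 0 = repr z 0 + repr w 0"
proof -
  assume "inR z" "inR w"
  have "z + w = (\<Sum>r<N. of_int (repr z r) * \<zeta> ^ r) + (\<Sum>r<N. of_int (repr w r) * \<zeta> ^ r)"
    by (rule arg_cong2[where f="(+)", OF repr[OF \<open>inR z\<close>] repr[OF \<open>inR w\<close>]])
  also have "\<dots> = (\<Sum>r<N. of_int (repr z r + repr w r) * \<zeta> ^ r)"
    by (simp add: sum.distrib algebra_simps)
  finally have "z + w = (\<Sum>r<N. of_int (repr z r + repr w r) * \<zeta> ^ r)" .
  from repr_eq[OF this, of 0] N_ge2 show ?thesis by simp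
qed

lemma repr_smult: "inR z \<Longrightarrow> repr (of_int c * z) 0 = c * repr z 0"
proof -
  assume "inR z"
  have "of_int c * z = of_int c * (\<Sum>r<N. of_int (repr z r) * \<zeta> ^ r)"
    by (rule arg_cong[OF repr[OF \<open>inR z\<close>]])
  also have "\<dots> = (\<Sum>r<N. of_int (c * repr z r) * \<zeta> ^ r)"
    by (simp add: sum_distrib_left mult.assoc)
  finally have "of_int c * z = (\<Sum>r<N. of_int (c * repr z r) * \<zeta> ^ r)" .
  from repr_eq[OF this, of 0] N_ge2 show ?thesis by simp
qed

lemma repr_0: "repr 0 0 = 0"
  using repr_eq[of 0 "\<lambda>_. 0" 0] N_ge2 by simp

lemma repr_sum: "(\<And>a. a \<in> A \<Longrightarrow> inR (f a)) \<Longrightarrow> repr (sum f A) 0 = (\<Sum>a\<in>A. repr (f a) 0)"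
proof (induct A rule: infinite_finite_induct)
  case (insert x F)
  then show ?case by (simp add: repr_add R_sum)
qed (auto simp: repr_0)

lemma zpow_rep: "j < N \<Longrightarrow> \<zeta> ^ j = (\<Sum>r<N. of_int (if r = j then 1 else 0) * \<zeta> ^ r)"
proof -
  assume j: "j < N"
  have "(\<Sum>r<N. of_int (if r = j then 1 else 0) * \<zeta> ^ r) = (\<Sum>r<N. if r = j then \<zeta> ^ j else 0)"
    by (rule sum.cong) auto
  also have "\<dots> = \<zeta> ^ j" using j by (simp add: sum.delta)
  finally show ?thesis by simp
qed

lemma cnj_pow: "d \<le> N \<Longrightarrow> cnj \<zeta> ^ d = - (\<zeta> ^ (N - d))"
proof -
  assume d: "d \<le> N"
  have "cnj \<zeta> ^ d * \<zeta> ^ d = 1" using cnj_z by (metis power_mult_distrib power_one)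
  moreover have "(- (\<zeta> ^ (N - d))) * \<zeta> ^ d = 1" using d zN by (simp add: power_add[symmetric])
  ultimately show ?thesis using z_ne0 by (metis mult_right_cancel power_not_zero)
qed

lemma repr_zpow: "j < N \<Longrightarrow> repr (\<zeta> ^ j) 0 = (if j = 0 then 1 else 0)"
  using repr_eq[OF zpow_rep, of j 0] N_ge2 by auto

lemma c0_term: "r < N \<Longrightarrow> s < N \<Longrightarrow> repr (\<zeta> ^ r * cnj \<zeta> ^ s) 0 = (if r = s then 1 else 0)"
proof -
  assume r: "r < N" and s: "s < N"
  show ?thesis
  proof (cases "s \<le> r")
    case True
    have "\<zeta> ^ r * cnj \<zeta> ^ s = \<zeta> ^ (r - s) * (\<zeta> ^ s * cnj \<zeta> ^ s)"
      using True by (simp add: power_add[symmetric])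
    also have "\<zeta> ^ s * cnj \<zeta> ^ s = 1" using cnj_z by (metis power_mult_distrib power_one mult.commute)
    finally have "\<zeta> ^ r * cnj \<zeta> ^ s = \<zeta> ^ (r - s)" by simp
    then show ?thesis using repr_zpow[of "r - s"] r True by auto
  next
    case False
    have "\<zeta> ^ r * cnj \<zeta> ^ s = (\<zeta> ^ r * cnj \<zeta> ^ r) * cnj \<zeta> ^ (s - r)"
      using False by (simp add: power_add[symmetric] mult.assoc)
    also have "\<zeta> ^ r * cnj \<zeta> ^ r = 1" using cnj_z by (metis power_mult_distrib power_one mult.commute)
    also have "cnj \<zeta> ^ (s - r) = - (\<zeta> ^ (N - (s - r)))" using cnj_pow[of "s - r"] s by simp
    finally have "\<zeta> ^ r * cnj \<zeta> ^ s = of_int (-1) * \<zeta> ^ (N - (s - r))" by simp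
    then have "repr (\<zeta> ^ r * cnj \<zeta> ^ s) 0 = - repr (\<zeta> ^ (N - (s - r))) 0"
      using repr_smult[OF R_zpow, of "-1" "N - (s - r)"] by simp
    also have "\<dots> = 0" using repr_zpow[of "N - (s - r)"] False s by simp
    finally show ?thesis using False by simp
  qed
qed

lemma unit_form:
  assumes Rw: "inR w" and ww: "w * cnj w = 1"
  shows "\<exists>s<N. \<exists>e::int. (e = 1 \<or> e = -1) \<and> w = of_int e * \<zeta> ^ s"
proof -
  define e where "e = repr w"
  have w: "w = (\<Sum>r<N. of_int (e r) * \<zeta> ^ r)" using repr[OF Rw] unfolding e_def .
  have "cnj w = (\<Sum>s<N. of_int (e s) * cnj \<zeta> ^ s)" unfolding w by simp
  then have "w * cnj w = (\<Sum>r<N. \<Sum>s<N. of_int (e r * e s) * (\<zeta> ^ r * cnj \<zeta> ^ s))"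
    unfolding w by (simp add: sum_product algebra_simps)
  then have "repr (w * cnj w) 0 = (\<Sum>r<N. repr (\<Sum>s<N. of_int (e r * e s) * (\<zeta> ^ r * cnj \<zeta> ^ s)) 0)"
    by (simp only:) (rule repr_sum, intro R_sum R_smult R_mult R_zpow R_pow R_cnjz)
  also have "\<dots> = (\<Sum>r<N. \<Sum>s<N. repr (of_int (e r * e s) * (\<zeta> ^ r * cnj \<zeta> ^ s)) 0)"
    by (intro sum.cong refl repr_sum R_smult R_mult R_zpow R_pow R_cnjz)
  also have "\<dots> = (\<Sum>r<N. \<Sum>s<N. e r * e s * (if r = s then 1 else 0))"
  proof (intro sum.cong refl)
    fix r s assume rs: "r \<in> {..<N}" "s \<in> {..<N}"
    have "repr (of_int (e r * e s) * (\<zeta> ^ r * cnj \<zeta> ^ s)) 0 = (e r * e s) * repr (\<zeta> ^ r * cnj \<zeta> ^ s) 0"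
      by (rule repr_smult) (intro R_mult R_zpow R_pow R_cnjz)
    also have "\<dots> = e r * e s * (if r = s then 1 else 0)" using c0_term[of r s] rs by simp
    finally show "repr (of_int (e r * e s) * (\<zeta> ^ r * cnj \<zeta> ^ s)) 0 = e r * e s * (if r = s then 1 else 0)" .
  qed
  also have "\<dots> = (\<Sum>r<N. (e r)^2)" by (simp add: power2_eq_square if_distrib sum.delta cong: if_cong)
  finally have "(\<Sum>r<N. (e r)^2) = 1" using ww repr_eq[of 1 "\<lambda>r. if r = 0 then 1 else 0" 0] rep_const[of 1] N_ge2
    by simp
  from sq1[OF _ this] obtain s where s: "s < N" "e s = 1 \<or> e s = -1" "\<forall>r<N. r \<noteq> s \<longrightarrow> e r = 0"
    by auto
  have "w = (\<Sum>r<N. if r = s then of_int (e s) * \<zeta> ^ s else 0)"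
    unfolding w by (rule sum.cong) (use s in auto)
  also have "\<dots> = of_int (e s) * \<zeta> ^ s" using s(1) by (simp add: sum.delta)
  finally show ?thesis using s by blast
qed

end


definition bsum :: "(nat \<Rightarrow> bool) \<Rightarrow> nat \<Rightarrow> nat" where
  "bsum b k = (\<Sum>i<k. 2 ^ i * of_bool (b i))"

lemma bsum_Suc: "bsum b (Suc k) = of_bool (b 0) + 2 * bsum (\<lambda>i. b (Suc i)) k"
  unfolding bsum_def sum.lessThan_Suc_shift by (simp only: sum_distrib_left power_Suc mult.assoc power_0 mult_1)

lemma bsum_lt: "bsum b k < 2 ^ k"
proof (induct k arbitrary: b)
  case 0 then show ?case by (simp add: bsum_def)
next
  case (Suc k)
  have "bsum (\<lambda>i. b (Suc i)) k < 2 ^ k" by (rule Suc)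
  then show ?case unfolding bsum_Suc by simp
qed

lemma bsum_bit: "j < k \<Longrightarrow> odd (bsum b k div 2 ^ j) = b j"
proof (induct k arbitrary: b j)
  case 0 then show ?case by simp
next
  case (Suc k)
  show ?case
  proof (cases j)
    case 0
    then show ?thesis unfolding bsum_Suc by simp
  next
    case (Suc j')
    have "bsum b (Suc k) div 2 ^ j = (bsum b (Suc k) div 2) div 2 ^ j'"
      using Suc by (simp add: div_mult2_eq mult.commute)
    also have "bsum b (Suc k) div 2 = bsum (\<lambda>i. b (Suc i)) k"
      unfolding bsum_Suc by simp
    finally show ?thesis using Suc.hyps[of j' "\<lambda>i. b (Suc i)"] Suc.prems Suc by simp
  qed
qed

lemma bsum_expand: "c < 2 ^ k \<Longrightarrow> bsum (\<lambda>i. odd (c div 2 ^ i)) k = c"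
proof (induct k arbitrary: c)
  case 0 then show ?case by (simp add: bsum_def)
next
  case (Suc k)
  have "c div 2 < 2 ^ k" using Suc.prems by simp
  then have IH: "bsum (\<lambda>i. odd (c div 2 div 2 ^ i)) k = c div 2" by (rule Suc.hyps)
  have "bsum (\<lambda>i. odd (c div 2 ^ i)) (Suc k) = of_bool (odd c) + 2 * bsum (\<lambda>i. odd (c div 2 div 2 ^ i)) k"
    unfolding bsum_Suc by (simp add: div_mult2_eq)
  also have "\<dots> = c" unfolding IH by simp
  finally show ?case .
qed


lemma sum_split2: "(\<Sum>r<2*m. g r) = (\<Sum>r<m. g r + g (r + (m::nat)))"
proof -
  have "(\<Sum>r<2*m. g r) = (\<Sum>r\<in>{0..<m}. g r) + (\<Sum>r\<in>{m..<2*m}. g r)"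
    by (simp add: atLeast0LessThan[symmetric] sum.atLeastLessThan_concat)
  also have "(\<Sum>r\<in>{m..<2*m}. g r) = (\<Sum>r\<in>{0..<m}. g (r + m))"
    using sum.shift_bounds_nat_ivl[of g 0 m m] by (simp add: mult_2)
  finally show ?thesis by (simp add: sum.distrib atLeast0LessThan)
qed

context zk begin

lemma decomp:
  fixes \<phi> :: "nat \<Rightarrow> complex"
  assumes V: "finite V" and fb: "\<forall>x\<in>V. f x < 2*N"
  shows "(\<Sum>x\<in>V. \<phi> (f x) * of_int (s x)) =
         (\<Sum>r<2*N. of_int (\<Sum>x\<in>V. if f x = r then s x else 0) * \<phi> r)"
proof -
  have "(\<Sum>x\<in>V. \<phi> (f x) * of_int (s x)) = (\<Sum>x\<in>V. \<Sum>r<2*N. if f x = r then \<phi> r * of_int (s x) else 0)"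
  proof (rule sum.cong[OF refl])
    fix x assume "x \<in> V"
    then have "f x < 2*N" using fb by auto
    then show "\<phi> (f x) * of_int (s x) = (\<Sum>r<2*N. if f x = r then \<phi> r * of_int (s x) else 0)"
      by (simp add: sum.delta[of _ "f x"] eq_commute[of "f x"])
  qed
  also have "\<dots> = (\<Sum>r<2*N. \<Sum>x\<in>V. if f x = r then \<phi> r * of_int (s x) else 0)" by (rule sum.swap)
  also have "\<dots> = (\<Sum>r<2*N. of_int (\<Sum>x\<in>V. if f x = r then s x else 0) * \<phi> r)"
  proof (intro sum.cong refl)
    fix r
    show "(\<Sum>x\<in>V. if f x = r then \<phi> r * of_int (s x) else 0) = of_int (\<Sum>x\<in>V. if f x = r then s x else 0) * \<phi> r"
      unfolding of_int_sum sum_distrib_right by (rule sum.cong) (auto intro: mult.commute)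
  qed
  finally show ?thesis .
qed

lemma key:
  assumes V: "finite V" and fb: "\<forall>x\<in>V. f x < 2*N"
    and HH: "(\<Sum>x\<in>V. \<zeta> ^ f x * of_int (s x)) * cnj (\<Sum>x\<in>V. \<zeta> ^ f x * of_int (s x)) = 2 ^ n"
    and ev: "even n"
  shows "\<exists>c<2*N. \<forall>\<phi>::nat \<Rightarrow> complex. (\<forall>r<N. \<phi> (r + N) = - \<phi> r) \<longrightarrow>
            (\<Sum>x\<in>V. \<phi> (f x) * of_int (s x)) = 2 ^ (n div 2) * \<phi> c"
proof -
  define C where "C r = (\<Sum>x\<in>V. if f x = r then s x else 0)" for r
  define D where "D r = C r - C (r + N)" for r
  have red: "(\<Sum>x\<in>V. \<phi> (f x) * of_int (s x)) = (\<Sum>r<N. of_int (D r) * \<phi> r)"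
    if anti: "\<forall>r<N. \<phi> (r + N) = - \<phi> r" for \<phi> :: "nat \<Rightarrow> complex"
  proof -
    have "(\<Sum>x\<in>V. \<phi> (f x) * of_int (s x)) = (\<Sum>r<2*N. of_int (C r) * \<phi> r)"
      unfolding C_def by (rule decomp[OF V fb])
    also have "\<dots> = (\<Sum>r<N. of_int (C r) * \<phi> r + of_int (C (r + N)) * \<phi> (r + N))"
      by (rule sum_split2)
    also have "\<dots> = (\<Sum>r<N. of_int (D r) * \<phi> r)"
    proof (intro sum.cong refl)
      fix r assume "r \<in> {..<N}"
      then have "\<phi> (r + N) = - \<phi> r" using anti by blast
      then show "of_int (C r) * \<phi> r + of_int (C (r + N)) * \<phi> (r + N) = of_int (D r) * \<phi> r"
        by (simp add: D_def algebra_simps)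
    qed
    finally show ?thesis .
  qed
  define H where "H = (\<Sum>x\<in>V. \<zeta> ^ f x * of_int (s x))"
  have zanti: "\<forall>r<N. \<zeta> ^ (r + N) = - (\<zeta> ^ r)" by (simp add: power_add zN)
  have Hs: "H = (\<Sum>r<N. of_int (D r) * \<zeta> ^ r)" unfolding H_def using red[OF zanti] .
  then have RH: "inR H" unfolding inR_def by blast
  have "H * cnj H = 2 ^ n" using HH unfolding H_def .
  from regular[OF RH this ev] obtain w where w: "inR w" "H = 2 ^ (n div 2) * w" "w * cnj w = 1" by blast
  from unit_form[OF w(1) w(3)] obtain s' e where se: "s' < N" "e = 1 \<or> e = -1" "w = of_int e * \<zeta> ^ s'"
    by blast
  define h where "h = n div 2"
  have "H = (\<Sum>r<N. of_int (if r = s' then 2 ^ h * e else 0) * \<zeta> ^ r)"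
  proof -
    have "(\<Sum>r<N. of_int (if r = s' then 2 ^ h * e else 0) * \<zeta> ^ r) = (\<Sum>r<N. if r = s' then of_int (2 ^ h * e) * \<zeta> ^ s' else 0)"
      by (rule sum.cong) auto
    also have "\<dots> = of_int (2 ^ h * e) * \<zeta> ^ s'" using se(1) by (simp add: sum.delta)
    also have "\<dots> = H" using w(2) se(3) unfolding h_def by simp
    finally show ?thesis by simp
  qed
  with Hs[symmetric] have eqH: "(\<Sum>r<N. of_int (D r) * \<zeta> ^ r) = (\<Sum>r<N. of_int (if r = s' then 2 ^ h * e else 0) * \<zeta> ^ r)"
    by (rule trans)
  have Dv: "\<And>r. r < N \<Longrightarrow> D r = (if r = s' then 2 ^ h * e else 0)"
    by (rule rep_unique[OF eqH])
  define c where "c = (if e = 1 then s' else s' + N)"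
  have c: "c < 2 * N" using se(1) unfolding c_def by auto
  have "(\<Sum>x\<in>V. \<phi> (f x) * of_int (s x)) = 2 ^ h * \<phi> c"
    if anti: "\<forall>r<N. \<phi> (r + N) = - \<phi> r" for \<phi> :: "nat \<Rightarrow> complex"
  proof -
    have "(\<Sum>x\<in>V. \<phi> (f x) * of_int (s x)) = (\<Sum>r<N. of_int (D r) * \<phi> r)" by (rule red[OF anti])
    also have "\<dots> = (\<Sum>r<N. if r = s' then of_int (2 ^ h * e) * \<phi> s' else 0)"
      by (rule sum.cong) (auto simp: Dv)
    also have "\<dots> = of_int (2 ^ h * e) * \<phi> s'" using se(1) by (simp add: sum.delta)
    also have "\<dots> = 2 ^ h * \<phi> c" using se(2) anti se(1) unfolding c_def by auto
    finally show ?thesis .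
  qed
  then show ?thesis using c unfolding h_def by blast
qed

end


lemma finite_Vn: "finite (Vn n)"
proof -
  have "Vn n = {xs. set xs \<subseteq> UNIV \<and> length xs = n}" unfolding Vn_def by auto
  moreover have "finite (UNIV :: bool set)" by simp
  ultimately show ?thesis using finite_lists_length_eq[of "UNIV :: bool set" n] by simp
qed

context zk begin

lemma zinj: assumes "a < 2*N" "b < 2*N" "\<zeta> ^ a = \<zeta> ^ b" shows "a = b"
proof (rule ccontr)
  have gen: False if ab: "a < b" "b < 2*N" "\<zeta> ^ a = \<zeta> ^ b" for a b
  proof -
    define d where "d = b - a"
    have d: "0 < d" "d < 2*N" using ab unfolding d_def by auto
    have "\<zeta> ^ a * \<zeta> ^ d = \<zeta> ^ b" unfolding d_def using ab(1) by (simp add: power_add[symmetric])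
    then have "\<zeta> ^ a * \<zeta> ^ d = \<zeta> ^ a * 1" using ab(3) by simp
    then have zd: "\<zeta> ^ d = 1" using z_ne0 by simp
    show False
    proof (cases "d < N")
      case True
      have "repr (\<zeta> ^ d) 0 = 0" using repr_zpow[OF True] d by simp
      moreover have "repr (\<zeta> ^ 0) 0 = 1" using repr_zpow[of 0] N_ge2 by simp
      ultimately show False using zd by simp
    next
      case False
      have e: "d - N + N = d" using False by simp
      have "\<zeta> ^ d = \<zeta> ^ (d - N + N)" by (simp only: e)
      then have "\<zeta> ^ d = \<zeta> ^ (d - N) * \<zeta> ^ N" by (simp only: power_add)
      then have "- (\<zeta> ^ (d - N)) = 1" using zd zN by simp
      then have "\<zeta> ^ (d - N) = -1" by (metis minus_minus)
      then have "\<zeta> ^ (d - N) = of_int (-1) * \<zeta> ^ 0" by simp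
      then have "repr (\<zeta> ^ (d - N)) 0 = -1 * repr (\<zeta> ^ 0) 0"
        using repr_smult[OF R_zpow, of "-1" 0] by simp
      moreover have "repr (\<zeta> ^ 0) 0 = 1" using repr_zpow[of 0] N_ge2 by simp
      moreover have "repr (\<zeta> ^ (d - N)) 0 \<in> {0, 1}" using repr_zpow[of "d - N"] d False by simp
      ultimately show False by simp
    qed
  qed
  assume "a \<noteq> b"
  then show False using gen[of a b] gen[of b a] assms by (cases "a < b") auto
qed

lemma bdual_val:
  assumes e: "walsh n g u = 2 ^ h * (if P then -1 else 1)" and sq: "sqrt (2 ^ n) = 2 ^ h"
  shows "bdual n g u = P"
  unfolding bdual_def
proof (rule the_equality)
  show "walsh n g u = sqrt (2 ^ n) * (-1) ^ of_bool P" using e sq by simp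
next
  fix b assume "walsh n g u = sqrt (2 ^ n) * (-1) ^ of_bool b"
  then have "(2::real) ^ h * (-1) ^ of_bool b = 2 ^ h * (if P then -1 else 1)" using e sq by simp
  then have "((-1)::real) ^ of_bool b = (if P then -1 else 1)" by simp
  then show "b = P" by (cases b; cases P) auto
qed

lemma main:
  fixes n :: nat and a :: "nat \<Rightarrow> bool list \<Rightarrow> bool" and u :: "bool list"
  assumes ev: "even n"
    and gb: "gbent n k (\<lambda>x. \<Sum>i<k. 2 ^ i * of_bool (a i x))"
    and u: "u \<in> Vn n"
  shows "gdual n k (\<lambda>x. \<Sum>i<k. 2 ^ i * of_bool (a i x)) u =
       (\<Sum>j<k - 1. 2 ^ j * of_bool (bdual n (a (k - 1)) u \<noteq> bdual n (\<lambda>x. a (k - 1) x \<noteq> a j x) u))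
       + 2 ^ (k - 1) * of_bool (bdual n (a (k - 1)) u)"
proof -
  define f :: "bool list \<Rightarrow> nat" where "f = (\<lambda>x. \<Sum>i<k. 2 ^ i * of_bool (a i x))"
  have fb': "f x = bsum (\<lambda>i. a i x) k" for x unfolding f_def bsum_def by simp
  obtain m where m: "k = Suc m" using k2 by (cases k) auto
  have k2N: "(2::nat) ^ k = 2 * N" unfolding m by simp
  define V where "V = Vn n"
  have V: "finite V" unfolding V_def by (rule finite_Vn)
  have fb: "\<forall>x\<in>V. f x < 2 * N" unfolding fb' k2N[symmetric] using bsum_lt by blast
  define s :: "bool list \<Rightarrow> int" where "s x = (-1) ^ ip n u x" for x
  have gH: "gH n k f u = (\<Sum>x\<in>V. \<zeta> ^ f x * of_int (s x))"
    unfolding gH_def V_def s_def by simp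
  define h where "h = n div 2"
  have n2: "n = 2 * h" using ev unfolding h_def by simp
  have "(2::real) ^ n = (2 ^ h)^2" by (simp only: n2 mult.commute[of 2] power_mult)
  then have sq: "sqrt (2 ^ n) = (2::real) ^ h" by simp
  have cm: "cmod (gH n k f u) = sqrt (2 ^ n)" using gb u unfolding gbent_def f_def by blast
  have HH: "gH n k f u * cnj (gH n k f u) = 2 ^ n"
  proof -
    have "gH n k f u * cnj (gH n k f u) = complex_of_real ((cmod (gH n k f u))^2)"
      using complex_norm_square[of "gH n k f u"] by simp
    also have "\<dots> = 2 ^ n" using cm by simp
    finally show ?thesis .
  qed
  obtain c where c: "c < 2 * N"
    and P: "\<And>\<phi>::nat \<Rightarrow> complex. (\<forall>r<N. \<phi> (r + N) = - \<phi> r) \<Longrightarrow>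
            (\<Sum>x\<in>V. \<phi> (f x) * of_int (s x)) = 2 ^ h * \<phi> c"
    using key[OF V fb HH[unfolded gH] ev] unfolding h_def by blast
  have zanti: "\<forall>r<N. \<zeta> ^ (r + N) = - (\<zeta> ^ r)" by (simp add: power_add zN)
  have gHc: "gH n k f u = complex_of_real (sqrt (2 ^ n)) * \<zeta> ^ c"
    using P[OF zanti] gH sq by simp
  have gd: "gdual n k f u = c"
    unfolding gdual_def
  proof (rule the_equality)
    show "c < 2 ^ k \<and> gH n k f u = complex_of_real (sqrt (2 ^ n)) * \<zeta> ^ c" using gHc c k2N by simp
  next
    fix c' assume c': "c' < 2 ^ k \<and> gH n k f u = complex_of_real (sqrt (2 ^ n)) * \<zeta> ^ c'"
    then have "complex_of_real (sqrt (2 ^ n)) * \<zeta> ^ c' = complex_of_real (sqrt (2 ^ n)) * \<zeta> ^ c"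
      using gHc by simp
    then have "\<zeta> ^ c' = \<zeta> ^ c" by simp
    then show "c' = c" using zinj c c' k2N by simp
  qed
  have wal: "bdual n g u = Q c"
    if gQ: "\<And>x. g x = Q (f x)" and anti: "\<forall>r<N. Q (r + N) = (\<not> Q r)" for g Q
  proof -
    define \<phi> :: "nat \<Rightarrow> complex" where "\<phi> r = (if Q r then -1 else 1)" for r
    have aphi: "\<forall>r<N. \<phi> (r + N) = - \<phi> r" using anti unfolding \<phi>_def by auto
    have "complex_of_real (walsh n g u) = (\<Sum>x\<in>V. \<phi> (f x) * of_int (s x))"
      unfolding walsh_def V_def s_def \<phi>_def of_real_sum
      by (intro sum.cong refl) (simp add: gQ power_add)
    also have "\<dots> = 2 ^ h * \<phi> c" by (rule P[OF aphi])
    finally have "complex_of_real (walsh n g u) = complex_of_real (2 ^ h * (if Q c then -1 else 1))"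
      unfolding \<phi>_def by simp
    then have "walsh n g u = 2 ^ h * (if Q c then -1 else 1)" using of_real_eq_iff by blast
    then show ?thesis using bdual_val sq by blast
  qed
  have Ndiv: "(r + N) div N = r div N + 1" for r using N_ge2 by simp
  have b1: "bdual n (a (k - 1)) u = odd (c div N)"
  proof (rule wal)
    fix x show "a (k - 1) x = odd (f x div N)" unfolding fb' using bsum_bit[of "k-1" k] k2 by simp
  next
    show "\<forall>r<N. odd ((r + N) div N) = (\<not> odd (r div N))" using Ndiv by simp
  qed
  have bj: "bdual n (\<lambda>x. a (k - 1) x \<noteq> a j x) u = (odd (c div N) \<noteq> odd (c div 2 ^ j))"
    if j: "j < k - 1" for j
  proof (rule wal[where Q="\<lambda>r. odd (r div N) \<noteq> odd (r div 2 ^ j)"])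
    fix x show "(a (k - 1) x \<noteq> a j x) = (odd (f x div N) \<noteq> odd (f x div 2 ^ j))"
      unfolding fb' using bsum_bit[of "k-1" k] bsum_bit[of j k] k2 j by simp
  next
    have NM: "N = 2 ^ j * 2 ^ (k - 1 - j)" using j by (simp add: power_add[symmetric])
    have ev2: "even ((2::nat) ^ (k - 1 - j))" using j by simp
    have "(r + N) div 2 ^ j = r div 2 ^ j + 2 ^ (k - 1 - j)" for r
      unfolding NM by simp
    then show "\<forall>r<N. (odd ((r + N) div N) \<noteq> odd ((r + N) div 2 ^ j)) = (\<not> (odd (r div N) \<noteq> odd (r div 2 ^ j)))"
      using Ndiv ev2 by auto
  qed
  have "(\<Sum>j<k - 1. 2 ^ j * of_bool (bdual n (a (k - 1)) u \<noteq> bdual n (\<lambda>x. a (k - 1) x \<noteq> a j x) u))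
       + 2 ^ (k - 1) * of_bool (bdual n (a (k - 1)) u)
     = (\<Sum>j<k - 1. 2 ^ j * of_bool (odd (c div 2 ^ j))) + 2 ^ (k - 1) * of_bool (odd (c div 2 ^ (k - 1)))"
    using b1 bj by (auto intro!: sum.cong)
  also have "\<dots> = bsum (\<lambda>i. odd (c div 2 ^ i)) k"
    unfolding bsum_def m by (simp only: sum.lessThan_Suc diff_Suc_1)
  also have "\<dots> = c" using bsum_expand c k2N by simp
  finally show ?thesis using gd unfolding f_def by simp
qed

end

theorem theorem5:
  fixes n k :: nat and a :: "nat \<Rightarrow> bool list \<Rightarrow> bool"
  assumes "even n" and "k \<ge> 2"
    and "gbent n k (\<lambda>x. \<Sum>i<k. 2 ^ i * of_bool (a i x))"
  shows "\<forall>u\<in>Vn n.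
     gdual n k (\<lambda>x. \<Sum>i<k. 2 ^ i * of_bool (a i x)) u =
       (\<Sum>j<k - 1. 2 ^ j * of_bool (bdual n (a (k - 1)) u \<noteq> bdual n (\<lambda>x. a (k - 1) x \<noteq> a j x) u))
       + 2 ^ (k - 1) * of_bool (bdual n (a (k - 1)) u)"
proof
  fix u assume u: "u \<in> Vn n"
  interpret zk k using assms(2) by unfold_locales
  show "gdual n k (\<lambda>x. \<Sum>i<k. 2 ^ i * of_bool (a i x)) u =
       (\<Sum>j<k - 1. 2 ^ j * of_bool (bdual n (a (k - 1)) u \<noteq> bdual n (\<lambda>x. a (k - 1) x \<noteq> a j x) u))
       + 2 ^ (k - 1) * of_bool (bdual n (a (k - 1)) u)"
    by (rule main[OF assms(1) assms(3) u])
qed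


end
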